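(* Consider an investor who allocates a fraction $w$ of wealth $W$ to a single risky asset and $1-w$ to a risk-free asset earning the constant continuous rate $r_f$, in the Heston stochastic volatility model $$\frac{dS}{S} = \mu\,dt + \sqrt{v_t}\,dW^{(1)}_t,\qquad dv_t = \lambda(\theta - v_t)\,dt + \kappa\sqrt{v_t}\,dW^{(2)}_t,$$ with $\theta,\lambda,\kappa>0$ and $\operatorname{corr}(dW^{(1)},dW^{(2)})=\rho$. A proportional wealth tax at rate $\tau_w$ is levied on all assets, so that wealth evolves as $$dW = \bigl\{W[r_f + w(\mu - r_f) - \tau_w] - C\bigr\}\,dt + wW\sqrt{v_t}\,dW^{(1)}_t,$$ where $C\ge 0$ is the consumption rate. The investor has CRRA utility $U(C)=C^{1-\gamma}/(1-\gamma)$, $\gamma>0$, $\gamma\neq1$, and maximises $E\bigl[\int_0^T e^{-\delta t}U(C_t)\,dt\bigr]$. Then the optimal portfolio weight $$w^* = \frac{\mu - r_f}{\gamma v} + \frac{f_v}{f}\cdot\frac{\kappa\rho}{\gamma}$$ (myopic demand plus intertemporal hedging demand), where the value function has the form $J(W,v,t) = \frac{W^{1-\gamma}}{1-\gamma}f(v,t)$, is independent of the wealth tax rate $\tau_w$.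
   Context: The value function $J(W,v,t)=\max_{C,w}E_t\bigl[\int_t^T e^{-\delta(s-t)}U(C_s)\,ds\bigr]$ satisfies the Hamilton–Jacobi–Bellman equation of this control problem; under CRRA utility it is taken of the separable form $J = \frac{W^{1-\gamma}}{1-\gamma}f(v,t)$ with $f>0$, and the displayed $w^*$ is the resulting first-order condition for the portfolio weight (with $f_v=\partial f/\partial v$). *)

theory Defs
  imports "HOL-Analysis.Analysis"
begin

definition crra :: "real \<Rightarrow> real \<Rightarrow> real" where
  "crra \<gamma> C = C powr (1 - \<gamma>) / (1 - \<gamma>)"

definition value_fn :: "real \<Rightarrow> (real \<Rightarrow> real \<Rightarrow> real) \<Rightarrow> real \<Rightarrow> real \<Rightarrow> real \<Rightarrow> real" where
  "value_fn \<gamma> f W v t = W powr (1 - \<gamma>) / (1 - \<gamma>) * f v t"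

text \<open>The expression maximised over (C,w) in the HJB equation
  0 = max_{C,w} [ U(C) - delta J + J_t + J_W (W (r_f + w (mu - r_f) - tau_w) - C)
        + 1/2 J_WW w^2 W^2 v + J_v lambda (theta - v) + 1/2 J_vv kappa^2 v
        + J_Wv w W kappa rho v ],
  with the partial derivatives of J taken literally (via deriv).\<close>
definition hjb_objective ::
  "real \<Rightarrow> real \<Rightarrow> real \<Rightarrow> real \<Rightarrow> real \<Rightarrow> real \<Rightarrow> real \<Rightarrow> real \<Rightarrow> real \<Rightarrow>
   (real \<Rightarrow> real \<Rightarrow> real) \<Rightarrow> real \<Rightarrow> real \<Rightarrow> real \<Rightarrow> real \<Rightarrow> real \<Rightarrow> real" where
  "hjb_objective \<mu> rf \<theta> lam \<kappa> \<rho> \<gamma> \<delta> \<tau>w f W v t w C =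
     (let J = value_fn \<gamma> f;
          J_W = deriv (\<lambda>x. J x v t) W;
          J_WW = deriv (\<lambda>x. deriv (\<lambda>y. J y v t) x) W;
          J_Wv = deriv (\<lambda>u. deriv (\<lambda>x. J x u t) W) v;
          J_v = deriv (\<lambda>u. J W u t) v;
          J_vv = deriv (\<lambda>u. deriv (\<lambda>z. J W z t) u) v;
          J_t = deriv (\<lambda>s. J W v s) t
      in crra \<gamma> C - \<delta> * J W v t + J_t
         + J_W * (W * (rf + w * (\<mu> - rf) - \<tau>w) - C)
         + 1/2 * J_WW * w\<^sup>2 * W\<^sup>2 * v
         + J_v * lam * (\<theta> - v) + 1/2 * J_vv * \<kappa>\<^sup>2 * v
         + J_Wv * w * W * \<kappa> * \<rho> * v)"

end

theory Submission
  imports Defs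
begin

lemma dJW:
  assumes "x > 0" "\<gamma> \<noteq> 1"
  shows "((\<lambda>y. value_fn \<gamma> f y u t) has_real_derivative x powr (-\<gamma>) * f u t) (at x)"
proof -
  have "((\<lambda>y. y powr (1-\<gamma>) / (1-\<gamma>) * f u t) has_real_derivative
        ((1-\<gamma>) * x powr (1-\<gamma>-1)) / (1-\<gamma>) * f u t) (at x)"
    by (intro DERIV_cmult_right DERIV_cdivide has_real_derivative_powr assms(1))
  moreover have "((1-\<gamma>) * x powr (1-\<gamma>-1)) / (1-\<gamma>) * f u t = x powr (-\<gamma>) * f u t"
    using assms by simp
  ultimately show ?thesis unfolding value_fn_def by metis
qed

lemma derivJW:
  assumes "x > 0" "\<gamma> \<noteq> 1"
  shows "deriv (\<lambda>y. value_fn \<gamma> f y u t) x = x powr (-\<gamma>) * f u t"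
  using dJW[OF assms] DERIV_imp_deriv by blast

lemma derivJWW:
  assumes "W > 0" "\<gamma> \<noteq> 1"
  shows "deriv (\<lambda>x. deriv (\<lambda>y. value_fn \<gamma> f y v t) x) W = -\<gamma> * W powr (-\<gamma>-1) * f v t"
proof -
  have "((\<lambda>x. x powr (-\<gamma>) * f v t) has_real_derivative (-\<gamma> * W powr (-\<gamma>-1)) * f v t) (at W)"
    using DERIV_cmult_right[OF has_real_derivative_powr[OF assms(1), of "-\<gamma>"], of "f v t"] by simp
  then have "((\<lambda>x. deriv (\<lambda>y. value_fn \<gamma> f y v t) x) has_real_derivative (-\<gamma> * W powr (-\<gamma>-1)) * f v t) (at W)"
    by (rule has_field_derivative_transform_within_open[where S="{0<..}"])
       (use assms derivJW in auto)
  then show ?thesis using DERIV_imp_deriv by blast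
qed

lemma derivJWv:
  assumes "W > 0" "\<gamma> \<noteq> 1" "(\<lambda>u. f u t) differentiable (at v)"
  shows "deriv (\<lambda>u. deriv (\<lambda>x. value_fn \<gamma> f x u t) W) v = W powr (-\<gamma>) * deriv (\<lambda>u. f u t) v"
proof -
  have e: "(\<lambda>u. deriv (\<lambda>x. value_fn \<gamma> f x u t) W) = (\<lambda>u. W powr (-\<gamma>) * f u t)"
    using derivJW[OF assms(1,2)] by auto
  have "((\<lambda>u. f u t) has_real_derivative deriv (\<lambda>u. f u t) v) (at v)"
    using assms(3) DERIV_deriv_iff_real_differentiable by blast
  then have "((\<lambda>u. W powr (-\<gamma>) * f u t) has_real_derivative W powr (-\<gamma>) * deriv (\<lambda>u. f u t) v) (at v)"
    by (rule DERIV_cmult)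
  then show ?thesis unfolding e using DERIV_imp_deriv by blast
qed

lemma quad_max:
  fixes a b c :: real
  assumes "a > 0"
  shows "{w. \<forall>w'. c + b*w' - a*w'^2 \<le> c + b*w - a*w^2} = {b/(2*a)}"
proof -
  have key: "c + b*w - a*w^2 = c + b^2/(4*a) - a*(w - b/(2*a))^2" for w
    using assms by (simp add: field_simps power2_eq_square)
  have "(\<forall>w'. c + b*w' - a*w'^2 \<le> c + b*w - a*w^2) \<longleftrightarrow> w = b/(2*a)" for w
  proof
    assume "\<forall>w'. c + b*w' - a*w'^2 \<le> c + b*w - a*w^2"
    then have "c + b*(b/(2*a)) - a*(b/(2*a))^2 \<le> c + b*w - a*w^2" by blast
    then have "a*(w - b/(2*a))^2 \<le> 0" unfolding key by simp
    then have "(w - b/(2*a))^2 \<le> 0" using assms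
      by (metis mult_pos_pos not_le zero_less_power2 power2_eq_square diff_self power_zero_numeral less_le)
    then show "w = b/(2*a)" by simp
  next
    assume "w = b/(2*a)"
    then show "\<forall>w'. c + b*w' - a*w'^2 \<le> c + b*w - a*w^2"
      unfolding key using assms by (simp add: mult_nonneg_nonneg)
  qed
  then show ?thesis by auto
qed

theorem proposition1:
  fixes \<mu> rf \<theta> lam \<kappa> \<rho> \<gamma> \<delta> W v t :: real
    and f :: "real \<Rightarrow> real \<Rightarrow> real"
  assumes "\<theta> > 0" and "lam > 0" and "\<kappa> > 0"
    and "-1 \<le> \<rho>" and "\<rho> \<le> 1"
    and "\<gamma> > 0" and "\<gamma> \<noteq> 1"
    and "W > 0" and "v > 0"
    and "f v t > 0"
    and "(\<lambda>u. f u t) differentiable (at v)"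
  shows "\<forall>\<tau>w. \<forall>C \<ge> 0.
           {w. \<forall>w'. hjb_objective \<mu> rf \<theta> lam \<kappa> \<rho> \<gamma> \<delta> \<tau>w f W v t w' C
                    \<le> hjb_objective \<mu> rf \<theta> lam \<kappa> \<rho> \<gamma> \<delta> \<tau>w f W v t w C}
           = {(\<mu> - rf) / (\<gamma> * v) + deriv (\<lambda>u. f u t) v / f v t * (\<kappa> * \<rho> / \<gamma>)}"
proof (intro allI impI)
  fix \<tau>w C :: real
  define F where "F = f v t"
  define D where "D = deriv (\<lambda>u. f u t) v"
  define P where "P = W powr (-\<gamma>)"
  have P0: "P > 0" using assms(8) by (simp add: P_def)
  have WW: "W powr (-\<gamma>-1) * W\<^sup>2 = P * W"
    using assms(8) by (simp add: P_def power2_eq_square powr_diff field_simps)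
  define a where "a = \<gamma> * P * W * F * v / 2"
  define b where "b = P * W * F * (\<mu> - rf) + P * D * W * \<kappa> * \<rho> * v"
  define c where "c = crra \<gamma> C - \<delta> * value_fn \<gamma> f W v t + deriv (\<lambda>s. value_fn \<gamma> f W v s) t
         + P * F * (W * (rf - \<tau>w) - C)
         + deriv (\<lambda>u. value_fn \<gamma> f W u t) v * lam * (\<theta> - v)
         + 1/2 * deriv (\<lambda>u. deriv (\<lambda>z. value_fn \<gamma> f W z t) u) v * \<kappa>\<^sup>2 * v"
  have a0: "a > 0" unfolding a_def using P0 assms F_def by simp
  have obj: "hjb_objective \<mu> rf \<theta> lam \<kappa> \<rho> \<gamma> \<delta> \<tau>w f W v t w C = c + b*w - a*w^2" for w
  proof -
    have "hjb_objective \<mu> rf \<theta> lam \<kappa> \<rho> \<gamma> \<delta> \<tau>w f W v t w C =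
       crra \<gamma> C - \<delta> * value_fn \<gamma> f W v t + deriv (\<lambda>s. value_fn \<gamma> f W v s) t
         + P * F * (W * (rf + w * (\<mu> - rf) - \<tau>w) - C)
         + 1/2 * (-\<gamma> * (W powr (-\<gamma>-1) * W\<^sup>2) * F) * w\<^sup>2 * v
         + deriv (\<lambda>u. value_fn \<gamma> f W u t) v * lam * (\<theta> - v)
         + 1/2 * deriv (\<lambda>u. deriv (\<lambda>z. value_fn \<gamma> f W z t) u) v * \<kappa>\<^sup>2 * v
         + P * D * w * W * \<kappa> * \<rho> * v"
      unfolding hjb_objective_def Let_def
      using derivJW[OF assms(8) assms(7)] derivJWW[OF assms(8) assms(7)] derivJWv[where f=f and t=t, OF assms(8) assms(7) assms(11)]
      by (simp add: P_def F_def D_def algebra_simps)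
    also have "\<dots> = c + b*w - a*w^2"
      unfolding WW c_def b_def a_def by (simp add: algebra_simps)
    finally show ?thesis .
  qed
  have "b / (2*a) = (\<mu> - rf) / (\<gamma> * v) + D / F * (\<kappa> * \<rho> / \<gamma>)"
    unfolding a_def b_def using P0 assms F_def by (simp add: field_simps)
  then show "{w. \<forall>w'. hjb_objective \<mu> rf \<theta> lam \<kappa> \<rho> \<gamma> \<delta> \<tau>w f W v t w' C
                    \<le> hjb_objective \<mu> rf \<theta> lam \<kappa> \<rho> \<gamma> \<delta> \<tau>w f W v t w C}
           = {(\<mu> - rf) / (\<gamma> * v) + deriv (\<lambda>u. f u t) v / f v t * (\<kappa> * \<rho> / \<gamma>)}"
    unfolding obj quad_max[OF a0] D_def F_def by simp
qed

end
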